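(* Let $\Delta$ be a simplicial complex on a finite vertex set $[m]$. If $\Delta$ is shifted (respectively, compressed), then so is $\mathrm{Inc}(\Delta)$.
   Context: $\mathbb{N}=\{1,2,3,\dots\}$, $[m]=\{1,\dots,m\}$. A simplicial complex on $[m]$ is a collection of subsets of $[m]$ closed under taking subsets. For $d\ge1$, $F_d(\Delta)$ is the set of faces of $\Delta$ with exactly $d$ elements, viewed in $\binom{\mathbb{N}}{d}$ (the $d$-subsets of $\mathbb{N}$, written $\mathbf{u}=(u_1,\dots,u_d)$ with $u_1<\cdots<u_d$). Squashed order: $\mathbf{u}<\mathbf{v}$ iff the largest element of the symmetric difference of $\mathbf u,\mathbf v$ lies in $\mathbf{v}$; a finite family in $\binom{\mathbb{N}}{d}$ is compressed if it consists of the smallest elements of $\binom{\mathbb{N}}{d}$ in this order. Borel order: $\mathbf{v}\le_B\mathbf{u}$ iff $v_i\le u_i$ for all $i$; a family is shifted if it contains every $\mathbf{v}\le_B\mathbf{u}$ for each of its members $\mathbf{u}$. $\Delta$ is shifted (resp. compressed) if $F_d(\Delta)$ is shifted (resp. compressed) for every $d\ge1$. $\mathrm{Inc}_1$ is the set of maps $\pi\colon\mathbb{N}\to\mathbb{N}$ with $\pi(j)<\pi(j+1)$ and $\pi(j)\le j+1$ for all $j$, acting by $\pi(\mathbf{u})=(\pi(u_1),\ldots,\pi(u_d))$; for $\mathcal{F}\subseteq\binom{\mathbb{N}}{d}$, $\mathrm{Inc}(\mathcal{F})=\{\pi(\mathbf{u})\mid\mathbf{u}\in\mathcal{F},\pi\in\mathrm{Inc}_1\}$,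 and $\mathrm{Inc}(\Delta)=\bigcup_{d\ge1}\mathrm{Inc}(F_d(\Delta))$ (together with the empty face), which is again a simplicial complex. *)

theory Defs
  imports Main
begin

definition Nsubsets :: "nat \<Rightarrow> nat set set" where
  "Nsubsets d = {u. finite u \<and> card u = d \<and> 0 \<notin> u}"

definition simplicial_complex :: "nat \<Rightarrow> nat set set \<Rightarrow> bool" where
  "simplicial_complex m \<Delta> \<longleftrightarrow>
     (\<forall>F\<in>\<Delta>. F \<subseteq> {1..m}) \<and> (\<forall>F\<in>\<Delta>. \<forall>G. G \<subseteq> F \<longrightarrow> G \<in> \<Delta>)"

definition faces :: "nat \<Rightarrow> nat set set \<Rightarrow> nat set set" where
  "faces d \<Delta> = {F \<in> \<Delta>. finite F \<and> card F = d}"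

definition borel_le :: "nat set \<Rightarrow> nat set \<Rightarrow> bool" where
  "borel_le v u \<longleftrightarrow> card v = card u \<and>
     (\<forall>i<card u. sorted_list_of_set v ! i \<le> sorted_list_of_set u ! i)"

definition squash_less :: "nat set \<Rightarrow> nat set \<Rightarrow> bool" where
  "squash_less u v \<longleftrightarrow> u \<noteq> v \<and> Max ((u - v) \<union> (v - u)) \<in> v"

definition shifted_family :: "nat \<Rightarrow> nat set set \<Rightarrow> bool" where
  "shifted_family d \<F> \<longleftrightarrow> (\<forall>u\<in>\<F>. \<forall>v\<in>Nsubsets d. borel_le v u \<longrightarrow> v \<in> \<F>)"

definition compressed_family :: "nat \<Rightarrow> nat set set \<Rightarrow> bool" where
  "compressed_family d \<F> \<longleftrightarrow> finite \<F> \<and>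
     (\<forall>u\<in>\<F>. \<forall>v\<in>Nsubsets d. squash_less v u \<longrightarrow> v \<in> \<F>)"

definition shifted_complex :: "nat set set \<Rightarrow> bool" where
  "shifted_complex \<Delta> \<longleftrightarrow> (\<forall>d\<ge>1. shifted_family d (faces d \<Delta>))"

definition compressed_complex :: "nat set set \<Rightarrow> bool" where
  "compressed_complex \<Delta> \<longleftrightarrow> (\<forall>d\<ge>1. compressed_family d (faces d \<Delta>))"

text \<open>Inc_1: maps pi : N \<rightarrow> N with pi(j) < pi(j+1) and pi(j) \<le> j+1 for all j \<ge> 1
  (values at 0 are irrelevant).\<close>
definition Inc1 :: "(nat \<Rightarrow> nat) set" where
  "Inc1 = {\<pi>. (\<forall>j\<ge>1. \<pi> j \<ge> 1 \<and> \<pi> j < \<pi> (Suc j) \<and> \<pi> j \<le> j + 1)}"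

definition IncFam :: "nat set set \<Rightarrow> nat set set" where
  "IncFam \<F> = {\<pi> ` u | u \<pi>. u \<in> \<F> \<and> \<pi> \<in> Inc1}"

definition IncComplex :: "nat set set \<Rightarrow> nat set set" where
  "IncComplex \<Delta> = insert {} (\<Union>d\<in>{1..}. IncFam (faces d \<Delta>))"

end

theory Submission
  imports Defs
begin

definition sh :: "nat \<Rightarrow> nat \<Rightarrow> nat" where "sh s j = (if j < s then j else Suc j)"
definition ush :: "nat \<Rightarrow> nat \<Rightarrow> nat" where "ush s j = (if j < s then j else j - 1)"

lemma sorted_image:
  assumes "finite A" "strict_mono_on A f"
  shows "sorted_list_of_set (f ` A) = map f (sorted_list_of_set A)"
proof -
  let ?xs = "sorted_list_of_set A"
  have xs: "sorted_wrt (<) ?xs" "set ?xs = A" using assms by auto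
  have "sorted_wrt (<) (map f ?xs)"
    unfolding sorted_wrt_iff_nth_less
  proof (intro allI impI)
    fix i j assume ij: "i < j" "j < length (map f ?xs)"
    then have "?xs ! i < ?xs ! j" using sorted_wrt_nth_less[OF xs(1)] by simp
    moreover have "?xs ! i \<in> A" "?xs ! j \<in> A" using ij xs(2) nth_mem by auto
    ultimately have "f (?xs ! i) < f (?xs ! j)" using assms(2) by (simp add: strict_mono_onD)
    then show "map f ?xs ! i < map f ?xs ! j" using ij by simp
  qed
  moreover have "set (map f ?xs) = f ` A" using xs(2) by simp
  moreover have "sorted_wrt (<) (sorted_list_of_set (f ` A))" by simp
  moreover have "set (sorted_list_of_set (f ` A)) = f ` A" using assms(1) by simp
  ultimately show ?thesis using strict_sorted_equal by metis
qed

lemma sh_Inc1: "s \<ge> 1 \<Longrightarrow> sh s \<in> Inc1"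
  unfolding Inc1_def sh_def by auto

lemma id_Inc1: "id \<in> Inc1"
  unfolding Inc1_def by auto

lemma Inc1D: assumes "\<pi> \<in> Inc1" "j \<ge> 1" shows "\<pi> j \<ge> 1" "\<pi> j < \<pi> (Suc j)" "\<pi> j \<le> j + 1"
  using assms unfolding Inc1_def by auto

lemma Inc1_ge: assumes "\<pi> \<in> Inc1" "j \<ge> 1" shows "\<pi> j \<ge> j"
  using assms(2)
proof (induction j rule: dec_induct)
  case base then show ?case using Inc1D[OF assms(1), of 1] by simp
next
  case (step n)
  have "\<pi> n < \<pi> (Suc n)" using Inc1D(2)[OF assms(1) step(1)] .
  then show ?case using step(3) by simp
qed

lemma Inc1_char:
  assumes "\<pi> \<in> Inc1" "0 \<notin> u"
  shows "\<pi> ` u = u \<or> (\<exists>s\<ge>1. \<pi> ` u = sh s ` u)"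
proof (cases "\<forall>j\<ge>1. \<pi> j = j")
  case True
  have "\<pi> x = x" if "x \<in> u" for x
  proof -
    have "x \<ge> 1" using that assms(2) by (cases x) auto
    then show ?thesis using True by blast
  qed
  then have "\<pi> ` u = u" by (simp add: image_cong[of u u \<pi> id, simplified])
  then show ?thesis by simp
next
  case False
  define s where "s = (LEAST j. j \<ge> 1 \<and> \<pi> j \<noteq> j)"
  have s1: "s \<ge> 1 \<and> \<pi> s \<noteq> s" using False unfolding s_def by (metis (mono_tags, lifting) LeastI)
  have below: "\<pi> j = j" if "1 \<le> j" "j < s" for j using that unfolding s_def
    using not_less_Least by blast
  have above: "\<pi> j = Suc j" if "s \<le> j" for j using that
  proof (induction j rule: dec_induct)
    case base
    have "\<pi> s \<ge> s" "\<pi> s \<le> s + 1" using Inc1_ge[OF assms(1)] Inc1D(3)[OF assms(1)] s1 by auto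
    then show ?case using s1 by simp
  next
    case (step n)
    have n1: "n \<ge> 1" using step(1) s1 by simp
    have "\<pi> n < \<pi> (Suc n)" "\<pi> (Suc n) \<le> Suc n + 1"
      using Inc1D(2)[OF assms(1) n1] Inc1D(3)[OF assms(1), of "Suc n"] by auto
    then show ?case using step(3) by simp
  qed
  have eq: "\<pi> x = sh s x" if "x \<in> u" for x
  proof -
    have "x \<ge> 1" using that assms(2) by (cases x) auto
    then show ?thesis unfolding sh_def using below above by (cases "x < s") auto
  qed
  have "\<pi> ` u = sh s ` u" by (rule image_cong[OF refl eq])
  then show ?thesis using s1 by blast
qed

lemma inj_sh: "inj (sh s)" unfolding sh_def inj_on_def by auto

lemma sh_mem: "x \<in> A \<longleftrightarrow> sh s x \<in> sh s ` A"
  using inj_sh by (simp add: inj_image_mem_iff)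

lemma card_sh: "card (sh s ` A) = card A"
  by (rule card_image[OF inj_on_subset[OF inj_sh subset_UNIV]])

lemma sh_ush: assumes "s \<notin> v" shows "sh s ` (ush s ` v) = v"
proof -
  have "sh s (ush s x) = x" if "x \<in> v" for x using that assms unfolding sh_def ush_def
    by (cases "x < s"; cases "x = s") auto
  then show ?thesis by (simp add: image_image)
qed

lemma ush_0: assumes "0 \<notin> v" "s \<ge> 1" "s \<notin> v" shows "0 \<notin> ush s ` v"
proof
  assume "0 \<in> ush s ` v"
  then obtain x where x: "x \<in> v" "ush s x = 0" by auto
  show False
  proof (cases "x < s")
    case True then show ?thesis using x assms unfolding ush_def by auto
  next
    case False
    then have "x \<le> 1" "x \<ge> 1" using x assms(2) unfolding ush_def by auto
    then have "x = s" using False assms(2) by linarith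
    then show ?thesis using x assms by auto
  qed
qed

lemma sh_0: assumes "0 \<notin> v" shows "0 \<notin> sh s ` v"
  using assms unfolding sh_def by (auto split: if_splits)

lemma squash_intro:
  assumes "finite p" "finite u" "N \<in> u" "N \<notin> p" "\<And>x. x > N \<Longrightarrow> x \<in> p \<longleftrightarrow> x \<in> u"
  shows "squash_less p u"
proof -
  let ?D = "(p - u) \<union> (u - p)"
  have "N \<in> ?D" using assms by auto
  moreover have "\<And>y. y \<in> ?D \<Longrightarrow> y \<le> N" using assms(5) by (meson DiffE UnE not_le_imp_less)
  moreover have "finite ?D" using assms by auto
  ultimately have "Max ?D = N" by (meson Max_eqI)
  then show ?thesis unfolding squash_less_def using assms by auto
qed

lemma compressed_key:
  assumes "finite u" "0 \<notin> u" "s \<ge> 1" "finite v" "0 \<notin> v" "card v = card u"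
    "squash_less v (sh s ` u)"
  shows "\<exists>s'\<ge>1. s' \<notin> v \<and> (squash_less (ush s' ` v) u \<or> ush s' ` v = u)"
proof -
  define w where "w = sh s ` u"
  define D where "D = (v - w) \<union> (w - v)"
  define M where "M = Max D"
  have fw: "finite w" using assms w_def by auto
  have Mw: "M \<in> w" and vw: "v \<noteq> w" using assms(7) unfolding squash_less_def M_def D_def w_def by auto
  have "D \<noteq> {}" "finite D" using vw fw assms(4) unfolding D_def by auto
  then have "M \<in> D" unfolding M_def by simp
  then have Mv: "M \<notin> v" unfolding D_def using Mw by auto
  have agree: "x \<in> v \<longleftrightarrow> x \<in> w" if "x > M" for x
  proof (rule ccontr)
    assume "\<not> ?thesis" then have "x \<in> D" unfolding D_def by auto
    then have "x \<le> M" unfolding M_def using \<open>finite D\<close> by simp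
    then show False using that by simp
  qed
  have sw: "s \<notin> w" unfolding w_def sh_def by (auto split: if_splits)
  have uw: "x \<in> u \<longleftrightarrow> sh s x \<in> w" for x unfolding w_def using sh_mem .
  show ?thesis
  proof (cases "M < s")
    case True
    have sv: "s \<notin> v" using agree[of s] True sw by auto
    define p where "p = ush s ` v"
    have vp: "sh s ` p = v" unfolding p_def using sh_ush[OF sv] .
    have pv: "x \<in> p \<longleftrightarrow> sh s x \<in> v" for x using sh_mem[of x p s] vp by simp
    have "squash_less p u"
    proof (rule squash_intro[where N = M])
      show "finite p" "finite u" using assms p_def by auto
      have "sh s M = M" using True unfolding sh_def by simp
      then show "M \<in> u" "M \<notin> p" using uw pv Mw Mv by auto
      fix x assume "x > M"
      moreover have "sh s x \<ge> x" unfolding sh_def by simp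
      ultimately show "x \<in> p \<longleftrightarrow> x \<in> u" using pv uw agree[of "sh s x"] by simp
    qed
    then show ?thesis using sv assms(3) p_def by blast
  next
    case False
    have "M \<noteq> s" using Mw sw by auto
    with False have Ms: "M > s" by simp
    have shM1: "sh s (M - 1) = M" using Ms unfolding sh_def by auto
    have M1u: "M - 1 \<in> u" using uw shM1 Mw by simp
    have shbig: "sh s x = Suc x" if "x \<ge> M" for x using that Ms unfolding sh_def by auto
    show ?thesis
    proof (cases "\<exists>y. 1 \<le> y \<and> y < M \<and> y \<notin> v")
      case True
      then obtain s' where s': "1 \<le> s'" "s' < M" "s' \<notin> v" by blast
      define p where "p = ush s' ` v"
      have vp: "sh s' ` p = v" unfolding p_def using sh_ush[OF s'(3)] .
      have pv: "x \<in> p \<longleftrightarrow> sh s' x \<in> v" for x using sh_mem[of x p s'] vp by simp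
      have "squash_less p u"
      proof (rule squash_intro[where N = "M - 1"])
        show "finite p" "finite u" using assms p_def by auto
        show "M - 1 \<in> u" by (rule M1u)
        have "sh s' (M - 1) = M" using s' unfolding sh_def by auto
        then show "M - 1 \<notin> p" using pv Mv by simp
        fix x assume "x > M - 1"
        then have xM: "x \<ge> M" by simp
        then have "sh s' x = Suc x" using s' unfolding sh_def by auto
        then show "x \<in> p \<longleftrightarrow> x \<in> u" using pv uw agree[of "Suc x"] shbig[OF xM] xM by simp
      qed
      then show ?thesis using s' p_def by blast
    next
      case False
      define p where "p = ush M ` v"
      have vp: "sh M ` p = v" unfolding p_def using sh_ush[OF Mv] .
      have pv: "x \<in> p \<longleftrightarrow> sh M x \<in> v" for x using sh_mem[of x p M] vp by simp
      have "u \<subseteq> p"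
      proof
        fix x assume xu: "x \<in> u"
        then have "x \<ge> 1" using assms(2) by (cases x) auto
        show "x \<in> p"
        proof (cases "x < M")
          case True
          then show ?thesis using pv False \<open>x \<ge> 1\<close> unfolding sh_def by auto
        next
          case c: False
          then have "sh M x = Suc x" unfolding sh_def by auto
          then show ?thesis using pv uw xu shbig[of x] c agree[of "Suc x"] by auto
        qed
      qed
      moreover have "card p = card u" using card_sh[of M p] vp assms(6) by simp
      moreover have "finite p" using p_def assms by auto
      ultimately have "p = u" by (metis card_subset_eq)
      then show ?thesis using Mv Ms p_def by (intro exI[of _ M]) auto
    qed
  qed
qed

lemma shifted_key:
  assumes "finite u" "0 \<notin> u" "s \<ge> 1" "finite v" "borel_le v (sh s ` u)"
  shows "borel_le v u \<or> (\<exists>s'\<ge>1. s' \<notin> v \<and> borel_le (ush s' ` v) u)"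
proof -
  define us where "us = sorted_list_of_set u"
  define vs where "vs = sorted_list_of_set v"
  define d where "d = card u"
  have smsh: "strict_mono_on u (sh s)" unfolding strict_mono_on_def sh_def by auto
  have ws: "sorted_list_of_set (sh s ` u) = map (sh s) us"
    unfolding us_def using sorted_image[OF assms(1) smsh] .
  have cv: "card v = d" using assms(5) card_sh[of s u] unfolding borel_le_def d_def by simp
  have le_w: "\<And>i. i < d \<Longrightarrow> vs ! i \<le> sh s (us ! i)"
    using assms(5) card_sh[of s u] unfolding borel_le_def d_def ws vs_def us_def
    by (simp add: length_sorted_list_of_set)
  have lus: "length us = d" "length vs = d" using cv unfolding us_def vs_def d_def by auto
  have sus: "sorted_wrt (<) us" "sorted_wrt (<) vs" unfolding us_def vs_def by auto
  have setus: "set us = u" "set vs = v" using assms unfolding us_def vs_def by auto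
  show ?thesis
  proof (cases "\<forall>i<d. vs ! i \<le> us ! i")
    case True
    then have "borel_le v u" unfolding borel_le_def using cv d_def vs_def us_def by simp
    then show ?thesis by simp
  next
    case False
    then obtain i0 where i0: "i0 < d" "vs ! i0 > us ! i0" "\<forall>i<i0. vs ! i \<le> us ! i"
    proof -
      from False have "\<exists>i. i < d \<and> \<not> vs ! i \<le> us ! i" by auto
      then obtain i where "i < d \<and> \<not> vs ! i \<le> us ! i" by blast
      define i0 where "i0 = (LEAST i. i < d \<and> \<not> vs ! i \<le> us ! i)"
      have "i0 < d \<and> \<not> vs ! i0 \<le> us ! i0" unfolding i0_def
        by (rule LeastI) fact
      moreover have "\<forall>i<i0. vs ! i \<le> us ! i"
      proof (intro allI impI)
        fix i assume "i < i0"
        then have "\<not> (i < d \<and> \<not> vs ! i \<le> us ! i)" unfolding i0_def by (rule not_less_Least)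
        then show "vs ! i \<le> us ! i" using \<open>i < i0\<close> \<open>i0 < d \<and> _\<close> by auto
      qed
      ultimately show ?thesis using that by auto
    qed
    have usi0: "us ! i0 \<ge> s"
    proof (rule ccontr)
      assume "\<not> ?thesis"
      then have "sh s (us ! i0) = us ! i0" unfolding sh_def by auto
      then show False using le_w[OF i0(1)] i0(2) by simp
    qed
    define s' where "s' = vs ! i0 - 1"
    have vi0: "vs ! i0 \<ge> 2" using i0(2) usi0 assms(3) by simp
    have below: "vs ! i < s'" if "i < i0" for i
    proof -
      have "us ! i < us ! i0" using sorted_wrt_nth_less[OF sus(1) that] i0(1) lus by simp
      then show ?thesis using i0(2,3) that unfolding s'_def by fastforce
    qed
    have above: "vs ! i > s'" if "i \<ge> i0" "i < d" for i
    proof (cases "i = i0")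
      case True then show ?thesis using vi0 unfolding s'_def by simp
    next
      case False
      then have "vs ! i0 < vs ! i" using sorted_wrt_nth_less[OF sus(2), of i0 i] that lus by simp
      then show ?thesis unfolding s'_def by simp
    qed
    have s'v: "s' \<notin> v"
    proof
      assume "s' \<in> v"
      then obtain i where "i < d" "vs ! i = s'" using setus(2) lus by (metis in_set_conv_nth)
      then show False using below above by (metis less_irrefl not_le)
    qed
    have s'1: "s' \<ge> 1" using vi0 unfolding s'_def by simp
    have smush: "strict_mono_on v (ush s')"
      unfolding strict_mono_on_def
    proof (intro allI impI)
      fix x y assume h: "x \<in> v \<and> y \<in> v \<and> x < y"
      then have "x \<noteq> s'" "y \<noteq> s'" using s'v by auto
      then show "ush s' x < ush s' y" using h unfolding ush_def by auto
    qed
    have ps: "sorted_list_of_set (ush s' ` v) = map (ush s') vs"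
      unfolding vs_def using sorted_image[OF assms(4) smush] .
    have cp: "card (ush s' ` v) = d" using ps lus
      by (metis assms(4) finite_imageI length_map length_sorted_list_of_set)
    have "ush s' (vs ! i) \<le> us ! i" if "i < d" for i
    proof (cases "i < i0")
      case True then show ?thesis using below[OF True] i0(3) unfolding ush_def by auto
    next
      case False
      then have "us ! i \<ge> s"
        using usi0 sorted_wrt_nth_less[OF sus(1), of i0 i] that lus by (cases "i = i0") auto
      then have "sh s (us ! i) = Suc (us ! i)" unfolding sh_def by auto
      then show ?thesis using le_w[OF that] above[of i] False that unfolding ush_def by auto
    qed
    then have "borel_le (ush s' ` v) u" unfolding borel_le_def ps using cp lus d_def us_def by simp
    then show ?thesis using s'v s'1 by blast
  qed
qed

lemma sc_face: assumes "simplicial_complex m \<Delta>" "F \<in> \<Delta>" shows "0 \<notin> F" "finite F" "F \<subseteq> {1..m}"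
proof -
  have "F \<subseteq> {1..m}" using assms unfolding simplicial_complex_def by auto
  then show "0 \<notin> F" "finite F" "F \<subseteq> {1..m}" by (auto intro: finite_subset)
qed

lemma faces_Inc_elim:
  assumes sc: "simplicial_complex m \<Delta>" and d: "d \<ge> 1" and w: "w \<in> faces d (IncComplex \<Delta>)"
  shows "\<exists>u\<in>faces d \<Delta>. w = u \<or> (\<exists>s\<ge>1. w = sh s ` u)"
proof -
  have cw: "card w = d" "w \<in> IncComplex \<Delta>" using w unfolding faces_def by auto
  then have "w \<noteq> {}" using d by auto
  with cw obtain d' u \<pi> where u: "u \<in> faces d' \<Delta>" "\<pi> \<in> Inc1" "w = \<pi> ` u"
    unfolding IncComplex_def IncFam_def by auto
  have u0: "0 \<notin> u" using sc_face[OF sc] u(1) unfolding faces_def by auto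
  have "w = u \<or> (\<exists>s\<ge>1. w = sh s ` u)" using Inc1_char[OF u(2) u0] u(3) by auto
  moreover then have "card w = card u" using card_sh by auto
  ultimately show ?thesis using u(1) cw unfolding faces_def by auto
qed

lemma faces_Inc_intro:
  assumes sc: "simplicial_complex m \<Delta>" and d: "d \<ge> 1" and p: "p \<in> faces d \<Delta>" and pi: "\<pi> \<in> Inc1"
  shows "\<pi> ` p \<in> faces d (IncComplex \<Delta>)"
proof -
  have "\<pi> ` p \<in> IncFam (faces d \<Delta>)" unfolding IncFam_def using p pi by auto
  then have "\<pi> ` p \<in> IncComplex \<Delta>" unfolding IncComplex_def using d by auto
  moreover have p0: "0 \<notin> p" "finite p" "card p = d" using sc_face[OF sc] p unfolding faces_def by auto
  moreover have "card (\<pi> ` p) = card p" using Inc1_char[OF pi p0(1)] card_sh by auto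
  ultimately show ?thesis unfolding faces_def by auto
qed

lemma Inc_bounded:
  assumes sc: "simplicial_complex m \<Delta>" shows "IncComplex \<Delta> \<subseteq> Pow {1..Suc m}"
proof
  fix w assume "w \<in> IncComplex \<Delta>"
  then consider "w = {}" | d u \<pi> where "u \<in> faces d \<Delta>" "\<pi> \<in> Inc1" "w = \<pi> ` u"
    unfolding IncComplex_def IncFam_def by auto
  then show "w \<in> Pow {1..Suc m}"
  proof cases
    case 1 then show ?thesis by simp
  next
    case (2 d u \<pi>)
    have "u \<subseteq> {1..m}" using sc_face[OF sc] 2(1) unfolding faces_def by auto
    moreover have "\<And>j. j \<ge> 1 \<Longrightarrow> 1 \<le> \<pi> j \<and> \<pi> j \<le> j + 1" using 2(2) unfolding Inc1_def by auto
    ultimately show ?thesis using 2(3) by force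
  qed
qed

theorem corollary4p1:
  fixes m :: nat and \<Delta> :: "nat set set"
  assumes "simplicial_complex m \<Delta>"
  shows "(shifted_complex \<Delta> \<longrightarrow> shifted_complex (IncComplex \<Delta>)) \<and>
         (compressed_complex \<Delta> \<longrightarrow> compressed_complex (IncComplex \<Delta>))"
proof (intro conjI impI)
  note sc = assms
  assume sh: "shifted_complex \<Delta>"
  show "shifted_complex (IncComplex \<Delta>)"
    unfolding shifted_complex_def shifted_family_def
  proof (intro allI impI ballI)
    fix d w v assume d: "d \<ge> 1" and w: "w \<in> faces d (IncComplex \<Delta>)" and v: "v \<in> Nsubsets d"
      and bl: "borel_le v w"
    have shd: "\<And>u v. u \<in> faces d \<Delta> \<Longrightarrow> v \<in> Nsubsets d \<Longrightarrow> borel_le v u \<Longrightarrow> v \<in> faces d \<Delta>"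
      using sh d unfolding shifted_complex_def shifted_family_def by blast
    obtain u where u: "u \<in> faces d \<Delta>" "w = u \<or> (\<exists>s\<ge>1. w = sh s ` u)"
      using faces_Inc_elim[OF sc d w] by blast
    have u0: "0 \<notin> u" "finite u" using sc_face[OF sc] u(1) unfolding faces_def by auto
    have v0: "finite v" "0 \<notin> v" "card v = d" using v unfolding Nsubsets_def by auto
    show "v \<in> faces d (IncComplex \<Delta>)"
    proof (cases "w = u")
      case True
      then have "v \<in> faces d \<Delta>" using shd u(1) v bl by simp
      then show ?thesis using faces_Inc_intro[OF sc d _ id_Inc1] by fastforce
    next
      case False
      then obtain s where s: "s \<ge> 1" "w = sh s ` u" using u(2) by auto
      from shifted_key[OF u0(2) u0(1) s(1) v0(1)] bl s(2)
      consider "borel_le v u" | s' where "s' \<ge> 1" "s' \<notin> v" "borel_le (ush s' ` v) u" by blast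
      then show ?thesis
      proof cases
        case 1
        then have "v \<in> faces d \<Delta>" using shd u(1) v by simp
        then show ?thesis using faces_Inc_intro[OF sc d _ id_Inc1] by fastforce
      next
        case 2
        define p where "p = ush s' ` v"
        have vp: "sh s' ` p = v" using sh_ush[OF 2(2)] p_def by simp
        have "card p = d" using card_sh[of s' p] vp v0 by simp
        moreover have "0 \<notin> p" using ush_0[OF v0(2) 2(1) 2(2)] p_def by simp
        moreover have "finite p" using p_def v0 by simp
        ultimately have "p \<in> Nsubsets d" unfolding Nsubsets_def by simp
        then have "p \<in> faces d \<Delta>" using shd u(1) 2(3) p_def by simp
        then show ?thesis using faces_Inc_intro[OF sc d _ sh_Inc1[OF 2(1)]] vp by blast
      qed
    qed
  qed
next
  note sc = assms
  assume cp: "compressed_complex \<Delta>"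
  show "compressed_complex (IncComplex \<Delta>)"
    unfolding compressed_complex_def compressed_family_def
  proof (intro allI impI conjI ballI)
    fix d :: nat assume d: "d \<ge> 1"
    have "faces d (IncComplex \<Delta>) \<subseteq> Pow {1..Suc m}" using Inc_bounded[OF sc] unfolding faces_def by auto
    then show "finite (faces d (IncComplex \<Delta>))" by (rule finite_subset) simp
  next
    fix d w v assume d: "d \<ge> 1" and w: "w \<in> faces d (IncComplex \<Delta>)" and v: "v \<in> Nsubsets d"
      and bl: "squash_less v w"
    have shd: "\<And>u v. u \<in> faces d \<Delta> \<Longrightarrow> v \<in> Nsubsets d \<Longrightarrow> squash_less v u \<Longrightarrow> v \<in> faces d \<Delta>"
      using cp d unfolding compressed_complex_def compressed_family_def by blast
    obtain u where u: "u \<in> faces d \<Delta>" "w = u \<or> (\<exists>s\<ge>1. w = sh s ` u)"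
      using faces_Inc_elim[OF sc d w] by blast
    have u0: "0 \<notin> u" "finite u" "card u = d" using sc_face[OF sc] u(1) unfolding faces_def by auto
    have v0: "finite v" "0 \<notin> v" "card v = d" using v unfolding Nsubsets_def by auto
    show "v \<in> faces d (IncComplex \<Delta>)"
    proof (cases "w = u")
      case True
      then have "v \<in> faces d \<Delta>" using shd u(1) v bl by simp
      then show ?thesis using faces_Inc_intro[OF sc d _ id_Inc1] by fastforce
    next
      case False
      then obtain s where s: "s \<ge> 1" "w = sh s ` u" using u(2) by auto
      obtain s' where s': "s' \<ge> 1" "s' \<notin> v" "squash_less (ush s' ` v) u \<or> ush s' ` v = u"
        using compressed_key[OF u0(2) u0(1) s(1) v0(1) v0(2)] v0(3) u0(3) bl s(2) by auto
      define p where "p = ush s' ` v"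
      have vp: "sh s' ` p = v" using sh_ush[OF s'(2)] p_def by simp
      have "card p = d" using card_sh[of s' p] vp v0 by simp
      moreover have "0 \<notin> p" using ush_0[OF v0(2) s'(1) s'(2)] p_def by simp
      moreover have "finite p" using p_def v0 by simp
      ultimately have "p \<in> Nsubsets d" unfolding Nsubsets_def by simp
      then have "p \<in> faces d \<Delta>" using shd u(1) s'(3) p_def by auto
      then show ?thesis using faces_Inc_intro[OF sc d _ sh_Inc1[OF s'(1)]] vp by blast
    qed
  qed
qed

end
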